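(* Let $\nu>0$, $\beta$ a constant, $K$ a smooth positive function with antiderivative $J(u)=\int K(u)\,du$ assumed invertible, and $C(u)=\beta K(u)$. For arbitrary constants $c_1,c_2$ define, for $z>0$, $t>0$, $$v(z,t)=\begin{cases} t^{-(1+\nu)/2}\exp\!\left(-\frac{\beta z^2}{4t}\right)\left(c_1+c_2\frac{(z/t)^{1-\nu}}{1-\nu}\right), & \nu\neq 1,\\[4pt] t^{-1}\exp\!\left(-\frac{\beta z^2}{4t}\right)\left(c_1+c_2\ln\frac{z}{t}\right), & \nu=1.\end{cases}$$ Then $v$ solves $\beta v_t=v_{zz}+\frac{\nu}{z}v_z$, and, wherever $v$ takes values in the range of $J$, $u(z,t)=J^{-1}(v(z,t))$ solves $C(u)u_t=z^{-\nu}\left(K(u)z^{\nu}u_z\right)_z$. *)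

theory Defs
  imports "HOL-Analysis.Analysis"
begin

definition vsol :: "real \<Rightarrow> real \<Rightarrow> real \<Rightarrow> real \<Rightarrow> real \<Rightarrow> real \<Rightarrow> real" where
  "vsol \<nu> \<beta> c1 c2 z t =
     (if \<nu> \<noteq> 1 then
        t powr (-(1 + \<nu>) / 2) * exp (- (\<beta> * z\<^sup>2) / (4 * t)) *
          (c1 + c2 * (z / t) powr (1 - \<nu>) / (1 - \<nu>))
      else
        t powr (-1) * exp (- (\<beta> * z\<^sup>2) / (4 * t)) * (c1 + c2 * ln (z / t)))"

end

theory Submission
  imports Defs "HOL-Complex_Analysis.Complex_Analysis"
begin

lemma part1:
  fixes v ft fz fzz :: "real\<Rightarrow>real\<Rightarrow>real"
  assumes hdt: "\<And>z t. z>0 \<Longrightarrow> t>0 \<Longrightarrow> ((\<lambda>s. v z s) has_real_derivative ft z t) (at t)"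
  and hdz: "\<And>z t. z>0 \<Longrightarrow> t>0 \<Longrightarrow> ((\<lambda>w. v w t) has_real_derivative fz z t) (at z)"
  and hdzz: "\<And>z t. z>0 \<Longrightarrow> t>0 \<Longrightarrow> ((\<lambda>w. fz w t) has_real_derivative fzz z t) (at z)"
  and pde: "\<And>z t. z>0 \<Longrightarrow> t>0 \<Longrightarrow> \<beta>*ft z t = fzz z t + \<nu>/z * fz z t"
  shows "(\<forall>z>0. \<forall>t>0.
        (\<lambda>s. v z s) differentiable (at t) \<and>
        (\<forall>\<^sub>F y in nhds z. (\<lambda>w. v w t) differentiable (at y)) \<and>
        (\<lambda>y. deriv (\<lambda>w. v w t) y) differentiable (at z) \<and>
        \<beta> * deriv (\<lambda>s. v z s) t =
          deriv (\<lambda>y. deriv (\<lambda>w. v w t) y) z + \<nu> / z * deriv (\<lambda>w. v w t) z)"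
proof (intro allI impI)
  fix z t :: real assume z: "z>0" and t: "t>0"
  have ev: "\<forall>\<^sub>F y in nhds z. y > 0"
    using eventually_nhds_in_open[of "{0<..}" z] z by auto
  have dd: "((\<lambda>y. deriv (\<lambda>w. v w t) y) has_real_derivative fzz z t) (at z)"
    apply (rule has_field_derivative_transform_within_open[OF hdzz[OF z t], of "{0<..}"])
    using z t hdz by (auto intro: DERIV_imp_deriv[symmetric])
  show "(\<lambda>s. v z s) differentiable (at t) \<and>
        (\<forall>\<^sub>F y in nhds z. (\<lambda>w. v w t) differentiable (at y)) \<and>
        (\<lambda>y. deriv (\<lambda>w. v w t) y) differentiable (at z) \<and>
        \<beta> * deriv (\<lambda>s. v z s) t =
          deriv (\<lambda>y. deriv (\<lambda>w. v w t) y) z + \<nu> / z * deriv (\<lambda>w. v w t) z"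
  proof (intro conjI)
    show "(\<lambda>s. v z s) differentiable (at t)"
      using hdt[OF z t] real_differentiable_def by blast
    show "\<forall>\<^sub>F y in nhds z. (\<lambda>w. v w t) differentiable (at y)"
      using ev by eventually_elim (use hdz t real_differentiable_def in blast)
    show "(\<lambda>y. deriv (\<lambda>w. v w t) y) differentiable (at z)"
      using dd real_differentiable_def by blast
    show "\<beta> * deriv (\<lambda>s. v z s) t =
          deriv (\<lambda>y. deriv (\<lambda>w. v w t) y) z + \<nu> / z * deriv (\<lambda>w. v w t) z"
      using DERIV_imp_deriv[OF dd] DERIV_imp_deriv[OF hdz[OF z t]] DERIV_imp_deriv[OF hdt[OF z t]] pde[OF z t]
      by simp
  qed
qed

lemma part2:
  fixes v ft fz fzz :: "real\<Rightarrow>real\<Rightarrow>real" and K J :: "real \<Rightarrow> real"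
  assumes hdt: "\<And>z t. z>0 \<Longrightarrow> t>0 \<Longrightarrow> ((\<lambda>s. v z s) has_real_derivative ft z t) (at t)"
  and hdz: "\<And>z t. z>0 \<Longrightarrow> t>0 \<Longrightarrow> ((\<lambda>w. v w t) has_real_derivative fz z t) (at z)"
  and hdzz: "\<And>z t. z>0 \<Longrightarrow> t>0 \<Longrightarrow> ((\<lambda>w. fz w t) has_real_derivative fzz z t) (at z)"
  and pde: "\<And>z t. z>0 \<Longrightarrow> t>0 \<Longrightarrow> \<beta>*ft z t = fzz z t + \<nu>/z * fz z t"
  and K_pos: "\<forall>x. K x > 0"
  and J_antideriv: "\<forall>x. (J has_real_derivative K x) (at x)"
  and J_inj: "inj J"
  and u_def: "u = (\<lambda>z t. inv J (v z t))"
  shows "(\<forall>z>0. \<forall>t>0. v z t \<in> range J \<longrightarrow>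
        (\<lambda>s. u z s) differentiable (at t) \<and>
        (\<forall>\<^sub>F y in nhds z. (\<lambda>w. u w t) differentiable (at y)) \<and>
        (\<lambda>y. K (u y t) * y powr \<nu> * deriv (\<lambda>w. u w t) y) differentiable (at z) \<and>
        (\<beta> * K (u z t)) * deriv (\<lambda>s. u z s) t =
          z powr (-\<nu>) * deriv (\<lambda>y. K (u y t) * y powr \<nu> * deriv (\<lambda>w. u w t) y) z)"
proof (intro allI impI)
  fix z t :: real assume z: "z>0" and t: "t>0" and vr: "v z t \<in> range J"
  define g where "g = inv J"
  have contJ: "continuous_on UNIV J"
    using J_antideriv by (meson DERIV_isCont continuous_at_imp_continuous_on)
  have openR: "open (range J)"
    by (rule invariance_of_domain[OF contJ]) (use J_inj in auto)
  have dg: "(g has_real_derivative inverse (K (g y))) (at y)" if yr: "y \<in> range J" for y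
  proof -
    obtain x where y: "y = J x" using yr by blast
    have gx: "g (J x) = x" unfolding g_def using J_inj by (simp add: inv_f_f)
    have "(g has_real_derivative inverse (K x)) (at (J x))"
      by (rule has_field_derivative_inverse_strong[where f=J and S=UNIV])
         (use J_antideriv K_pos contJ gx g_def J_inj in \<open>auto simp: inv_f_f less_le\<close>)
    then show ?thesis using y gx by simp
  qed
  have ev: "\<forall>\<^sub>F y in nhds z. y > 0 \<and> v y t \<in> range J"
  proof -
    have "isCont (\<lambda>w. v w t) z" using hdz[OF z t] by (rule DERIV_isCont)
    then have "((\<lambda>w. v w t) \<longlongrightarrow> v z t) (nhds z)"
      using tendsto_at_iff_tendsto_nhds[of "\<lambda>w. v w t" z] by (simp add: isCont_def)
    then have "\<forall>\<^sub>F y in nhds z. v y t \<in> range J"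
      using topological_tendstoD[OF _ openR vr] by blast
    moreover have "\<forall>\<^sub>F y in nhds z. y > 0"
      using eventually_nhds_in_open[of "{0<..}" z] z by auto
    ultimately show ?thesis by eventually_elim auto
  qed
  have du: "((\<lambda>w. u w t) has_real_derivative inverse (K (u y t)) * fz y t) (at y)"
    if "y > 0" "v y t \<in> range J" for y
    unfolding u_def g_def[symmetric]
    using DERIV_chain2[OF dg[OF that(2)] hdz[OF that(1) t]] .
  have dut: "((\<lambda>s. u z s) has_real_derivative inverse (K (u z t)) * ft z t) (at t)"
    unfolding u_def g_def[symmetric]
    using DERIV_chain2[OF dg[OF vr] hdt[OF z t]] .
  have evq: "\<forall>\<^sub>F y in nhds z. K (u y t) * y powr \<nu> * deriv (\<lambda>w. u w t) y = y powr \<nu> * fz y t"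
    using ev
  proof eventually_elim
    case (elim y)
    then show ?case using DERIV_imp_deriv[OF du[of y]] K_pos[rule_format, of "u y t"]
      by (simp add: field_simps)
  qed
  have dp: "((\<lambda>y. y powr \<nu> * fz y t) has_real_derivative
      \<nu> * z powr (\<nu> - 1) * fz z t + z powr \<nu> * fzz z t) (at z)"
    using z by (auto intro!: derivative_eq_intros hdzz[OF z t])
  have dq: "((\<lambda>y. K (u y t) * y powr \<nu> * deriv (\<lambda>w. u w t) y) has_real_derivative
      \<nu> * z powr (\<nu> - 1) * fz z t + z powr \<nu> * fzz z t) (at z)"
    using dp DERIV_cong_ev[OF refl evq refl] by blast
  show "(\<lambda>s. u z s) differentiable (at t) \<and>
        (\<forall>\<^sub>F y in nhds z. (\<lambda>w. u w t) differentiable (at y)) \<and>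
        (\<lambda>y. K (u y t) * y powr \<nu> * deriv (\<lambda>w. u w t) y) differentiable (at z) \<and>
        (\<beta> * K (u z t)) * deriv (\<lambda>s. u z s) t =
          z powr (-\<nu>) * deriv (\<lambda>y. K (u y t) * y powr \<nu> * deriv (\<lambda>w. u w t) y) z"
  proof (intro conjI)
    show "(\<lambda>s. u z s) differentiable (at t)"
      using dut real_differentiable_def by blast
    show "\<forall>\<^sub>F y in nhds z. (\<lambda>w. u w t) differentiable (at y)"
      using ev by eventually_elim (use du real_differentiable_def in blast)
    show "(\<lambda>y. K (u y t) * y powr \<nu> * deriv (\<lambda>w. u w t) y) differentiable (at z)"
      using dq real_differentiable_def by blast
    have p1: "z powr (\<nu> - 1) = z powr \<nu> / z" using z by (simp add: powr_diff)
    have p2: "z powr (-\<nu>) = inverse (z powr \<nu>)" using z by (simp add: powr_minus)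
    have "z powr \<nu> > 0" using z by simp
    then show "(\<beta> * K (u z t)) * deriv (\<lambda>s. u z s) t =
          z powr (-\<nu>) * deriv (\<lambda>y. K (u y t) * y powr \<nu> * deriv (\<lambda>w. u w t) y) z"
      unfolding DERIV_imp_deriv[OF dq] DERIV_imp_deriv[OF dut] p1 p2
      using pde[OF z t] K_pos[rule_format, of "u z t"] z
      by (simp add: field_simps) (metis (no_types, lifting) distrib_left mult.left_commute)
  qed
qed



definition Wf :: "real \<Rightarrow> real \<Rightarrow> real \<Rightarrow> real \<Rightarrow> real \<Rightarrow> real" where
  "Wf p q \<beta> z t = z powr p * t powr q * exp (- (\<beta> * z\<^sup>2) / (4 * t))"

lemma Wf_dt:
  assumes "z > 0" "t > 0"
  shows "((\<lambda>s. Wf p q \<beta> z s) has_real_derivative Wf p q \<beta> z t * (q/t + \<beta>*z\<^sup>2/(4*t\<^sup>2))) (at t)"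
proof -
  have "((\<lambda>s. Wf p q \<beta> z s) has_real_derivative
     z powr p * (q * t powr (q - 1) * exp (- (\<beta> * z\<^sup>2) / (4 * t)) +
      t powr q * (exp (- (\<beta> * z\<^sup>2) / (4 * t)) * ((\<beta> * z\<^sup>2) * 4 / (4*t)\<^sup>2)))) (at t)"
    unfolding Wf_def using assms
    by (auto intro!: derivative_eq_intros simp: power2_eq_square field_simps)
  moreover have "t powr (q - 1) = t powr q / t" using assms by (simp add: powr_diff)
  ultimately show ?thesis
    using assms unfolding Wf_def by (simp add: field_simps power2_eq_square)
qed

lemma Wf_dz:
  assumes "z > 0" "t > 0"
  shows "((\<lambda>w. Wf p q \<beta> w t) has_real_derivative Wf p q \<beta> z t * (p/z - \<beta>*z/(2*t))) (at z)"
proof -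
  have "((\<lambda>w. Wf p q \<beta> w t) has_real_derivative
     (p * z powr (p - 1) * exp (- (\<beta> * z\<^sup>2) / (4 * t)) +
      z powr p * (exp (- (\<beta> * z\<^sup>2) / (4 * t)) * (- (\<beta> * (2 * z)) / (4 * t)))) * t powr q) (at z)"
    unfolding Wf_def using assms
    by (auto intro!: derivative_eq_intros simp: power2_eq_square field_simps)
  moreover have "z powr (p - 1) = z powr p / z" using assms by (simp add: powr_diff)
  ultimately show ?thesis
    using assms unfolding Wf_def by (simp add: field_simps power2_eq_square)
qed

lemma Wf_dzz:
  assumes "z > 0" "t > 0"
  shows "((\<lambda>w. Wf p q \<beta> w t * (p/w - \<beta>*w/(2*t))) has_real_derivative
     Wf p q \<beta> z t * ((p/z - \<beta>*z/(2*t))\<^sup>2 - p/z\<^sup>2 - \<beta>/(2*t))) (at z)"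
proof -
  have g: "((\<lambda>w. p/w - \<beta>*w/(2*t)) has_real_derivative (- p/z\<^sup>2 - \<beta>/(2*t))) (at z)"
    using assms by (auto intro!: derivative_eq_intros simp: power2_eq_square field_simps)
  show ?thesis
    by (rule DERIV_cong[OF DERIV_mult[OF Wf_dz[OF assms] g]]) (simp add: field_simps power2_eq_square)
qed

lemma lin: "(c1::real)*A*(Y1+n*Z1) + c*B*(Y2+n*Z2) = c1*(A*Y1) + c*(B*Y2) + n*(c1*(A*Z1)+c*(B*Z2))"
  by (simp add: algebra_simps)

definition Good :: "(real \<Rightarrow> real \<Rightarrow> real) \<Rightarrow> real \<Rightarrow> real \<Rightarrow> bool" where
  "Good v \<beta> \<nu> \<longleftrightarrow> (\<exists>ft fz fzz.
     (\<forall>z t. z>0 \<longrightarrow> t>0 \<longrightarrow> ((\<lambda>s. v z s) has_real_derivative ft z t) (at t)) \<and>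
     (\<forall>z t. z>0 \<longrightarrow> t>0 \<longrightarrow> ((\<lambda>w. v w t) has_real_derivative fz z t) (at z)) \<and>
     (\<forall>z t. z>0 \<longrightarrow> t>0 \<longrightarrow> ((\<lambda>w. fz w t) has_real_derivative fzz z t) (at z)) \<and>
     (\<forall>z t. z>0 \<longrightarrow> t>0 \<longrightarrow> \<beta>*ft z t = fzz z t + \<nu>/z * fz z t))"

lemma Good_ne1:
  assumes nu: "\<nu> \<noteq> 1"
  shows "Good (vsol \<nu> \<beta> c1 c2) \<beta> \<nu>"
proof -
  define a where "a = -(1+\<nu>)/2"
  define b where "b = a - (1 - \<nu>)"
  define V where "V = (\<lambda>z t. c1 * Wf 0 a \<beta> z t + c2/(1-\<nu>) * Wf (1-\<nu>) b \<beta> z t)"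
  have eqV: "vsol \<nu> \<beta> c1 c2 z t = V z t" if "z>0" "t>0" for z t
  proof -
    have h1: "(z/t) powr (1-\<nu>) = z powr (1-\<nu>) / t powr (1-\<nu>)" using that by (simp add: powr_divide)
    have h2: "t powr a = t powr b * t powr (1-\<nu>)" unfolding b_def using that by (simp add: powr_add[symmetric])
    have h: "(z/t) powr (1-\<nu>) * t powr a = z powr (1-\<nu>) * t powr b"
      unfolding h1 h2 using that by simp
    have "vsol \<nu> \<beta> c1 c2 z t = t powr a * exp (- (\<beta> * z\<^sup>2) / (4 * t)) *
          (c1 + c2 * (z / t) powr (1 - \<nu>) / (1 - \<nu>))"
      using nu unfolding vsol_def a_def by simp
    also have "\<dots> = V z t" unfolding V_def Wf_def using that h
      by (simp add: field_simps)
    finally show ?thesis .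
  qed
  define ft where "ft = (\<lambda>z t. c1 * (Wf 0 a \<beta> z t * (a/t + \<beta>*z\<^sup>2/(4*t\<^sup>2))) +
      c2/(1-\<nu>) * (Wf (1-\<nu>) b \<beta> z t * (b/t + \<beta>*z\<^sup>2/(4*t\<^sup>2))))"
  define fz where "fz = (\<lambda>z t. c1 * (Wf 0 a \<beta> z t * (0/z - \<beta>*z/(2*t))) +
      c2/(1-\<nu>) * (Wf (1-\<nu>) b \<beta> z t * ((1-\<nu>)/z - \<beta>*z/(2*t))))"
  define fzz where "fzz = (\<lambda>z t. c1 * (Wf 0 a \<beta> z t * ((0/z - \<beta>*z/(2*t))\<^sup>2 - 0/z\<^sup>2 - \<beta>/(2*t))) +
      c2/(1-\<nu>) * (Wf (1-\<nu>) b \<beta> z t * (((1-\<nu>)/z - \<beta>*z/(2*t))\<^sup>2 - (1-\<nu>)/z\<^sup>2 - \<beta>/(2*t))))"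
  have "((\<lambda>s. vsol \<nu> \<beta> c1 c2 z s) has_real_derivative ft z t) (at t)" if "z>0" "t>0" for z t
  proof (rule has_field_derivative_transform_within_open[where S="{0<..}"])
    show "((\<lambda>s. V z s) has_real_derivative ft z t) (at t)"
      unfolding V_def ft_def
      by (intro DERIV_add DERIV_cmult Wf_dt that)
  qed (use that eqV in auto)
  moreover have "((\<lambda>w. vsol \<nu> \<beta> c1 c2 w t) has_real_derivative fz z t) (at z)" if "z>0" "t>0" for z t
  proof (rule has_field_derivative_transform_within_open[where S="{0<..}"])
    show "((\<lambda>w. V w t) has_real_derivative fz z t) (at z)"
      unfolding V_def fz_def
      by (intro DERIV_add DERIV_cmult Wf_dz that)
  qed (use that eqV in auto)
  moreover have "((\<lambda>w. fz w t) has_real_derivative fzz z t) (at z)" if "z>0" "t>0" for z t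
    unfolding fzz_def fz_def
    by (intro DERIV_add DERIV_cmult Wf_dzz that)
  moreover have "\<beta>*ft z t = fzz z t + \<nu>/z * fz z t" if "z>0" "t>0" for z t
  proof -
    define A where "A = Wf 0 a \<beta> z t"
    define B where "B = Wf (1-\<nu>) b \<beta> z t"
    have e1: "\<beta>*(a/t + \<beta>*z\<^sup>2/(4*t\<^sup>2)) = ((0/z - \<beta>*z/(2*t))\<^sup>2 - 0/z\<^sup>2 - \<beta>/(2*t)) + \<nu>/z*(0/z - \<beta>*z/(2*t))"
      unfolding a_def using that by (simp add: field_simps power2_eq_square)
    have e2: "\<beta>*(b/t + \<beta>*z\<^sup>2/(4*t\<^sup>2)) = (((1-\<nu>)/z - \<beta>*z/(2*t))\<^sup>2 - (1-\<nu>)/z\<^sup>2 - \<beta>/(2*t)) + \<nu>/z*((1-\<nu>)/z - \<beta>*z/(2*t))"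
      unfolding b_def a_def using that by (simp add: field_simps power2_eq_square)
    have "\<beta>*ft z t = c1*A*(\<beta>*(a/t + \<beta>*z\<^sup>2/(4*t\<^sup>2))) + c2/(1-\<nu>)*B*(\<beta>*(b/t + \<beta>*z\<^sup>2/(4*t\<^sup>2)))"
      unfolding ft_def A_def B_def by (simp add: algebra_simps)
    also have "\<dots> = fzz z t + \<nu>/z * fz z t"
      unfolding e1 e2 fzz_def fz_def A_def[symmetric] B_def[symmetric] by (rule lin)
    finally show ?thesis .
  qed
  ultimately show ?thesis unfolding Good_def by blast
qed

lemma pde_eq1: fixes W Lg :: real assumes "z>0" "t>0" shows
 "\<beta>*( c1 * (W * (-1/t + \<beta>*z\<^sup>2/(4*t\<^sup>2))) +
      c2 * (W * (-1/t + \<beta>*z\<^sup>2/(4*t\<^sup>2)) * Lg + W * (-1/t))) =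
  c1 * (W * ((0/z - \<beta>*z/(2*t))\<^sup>2 - 0/z\<^sup>2 - \<beta>/(2*t))) +
      c2 * (W * ((0/z - \<beta>*z/(2*t))\<^sup>2 - 0/z\<^sup>2 - \<beta>/(2*t)) * Lg
         + W * (0/z - \<beta>*z/(2*t)) * (1/z)
         + (W * (0/z - \<beta>*z/(2*t)) * (1/z) + W * (-1/z\<^sup>2)))
  + 1/z * (c1 * (W * (0/z - \<beta>*z/(2*t))) +
      c2 * (W * (0/z - \<beta>*z/(2*t)) * Lg + W * (1/z)))"
  using assms by (simp add: field_simps power2_eq_square)

lemma Good_eq1:
  shows "Good (vsol 1 \<beta> c1 c2) \<beta> 1"
proof -
  define W where "W = Wf 0 (-1) \<beta>"
  define V where "V = (\<lambda>z t. c1 * W z t + c2 * (W z t * (ln z - ln t)))"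
  have eqV: "vsol 1 \<beta> c1 c2 z t = V z t" if "z>0" "t>0" for z t
    using that unfolding vsol_def V_def W_def Wf_def by (simp add: ln_div field_simps)
  define ft where "ft = (\<lambda>z t. c1 * (W z t * (-1/t + \<beta>*z\<^sup>2/(4*t\<^sup>2))) +
      c2 * (W z t * (-1/t + \<beta>*z\<^sup>2/(4*t\<^sup>2)) * (ln z - ln t) + W z t * (-1/t)))"
  define fz where "fz = (\<lambda>z t. c1 * (W z t * (0/z - \<beta>*z/(2*t))) +
      c2 * (W z t * (0/z - \<beta>*z/(2*t)) * (ln z - ln t) + W z t * (1/z)))"
  define fzz where "fzz = (\<lambda>z t. c1 * (W z t * ((0/z - \<beta>*z/(2*t))\<^sup>2 - 0/z\<^sup>2 - \<beta>/(2*t))) +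
      c2 * (W z t * ((0/z - \<beta>*z/(2*t))\<^sup>2 - 0/z\<^sup>2 - \<beta>/(2*t)) * (ln z - ln t)
         + W z t * (0/z - \<beta>*z/(2*t)) * (1/z)
         + (W z t * (0/z - \<beta>*z/(2*t)) * (1/z) + W z t * (-1/z\<^sup>2))))"
  have "((\<lambda>s. vsol 1 \<beta> c1 c2 z s) has_real_derivative ft z t) (at t)" if "z>0" "t>0" for z t
  proof (rule has_field_derivative_transform_within_open[where S="{0<..}"])
    have l: "((\<lambda>s. ln z - ln s) has_real_derivative -1/t) (at t)"
      using that by (auto intro!: derivative_eq_intros)
    have "((\<lambda>s. W z s * (ln z - ln s)) has_real_derivative
        W z t * (-1/t + \<beta>*z\<^sup>2/(4*t\<^sup>2)) * (ln z - ln t) + W z t * (-1/t)) (at t)"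
      by (rule DERIV_cong[OF DERIV_mult[OF Wf_dt[OF that, of 0 "-1" \<beta>, folded W_def] l]])
         (simp add: algebra_simps)
    then show "((\<lambda>s. V z s) has_real_derivative ft z t) (at t)"
      unfolding V_def ft_def
      by (intro DERIV_add DERIV_cmult Wf_dt[OF that, of 0 "-1" \<beta>, folded W_def])
  qed (use that eqV in auto)
  moreover have "((\<lambda>w. vsol 1 \<beta> c1 c2 w t) has_real_derivative fz z t) (at z)" if "z>0" "t>0" for z t
  proof (rule has_field_derivative_transform_within_open[where S="{0<..}"])
    have l: "((\<lambda>w. ln w - ln t) has_real_derivative 1/z) (at z)"
      using that by (auto intro!: derivative_eq_intros)
    have "((\<lambda>w. W w t * (ln w - ln t)) has_real_derivative
        W z t * (0/z - \<beta>*z/(2*t)) * (ln z - ln t) + W z t * (1/z)) (at z)"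
      by (rule DERIV_cong[OF DERIV_mult[OF Wf_dz[OF that, of 0 "-1" \<beta>, folded W_def] l]])
         (simp add: algebra_simps)
    then show "((\<lambda>w. V w t) has_real_derivative fz z t) (at z)"
      unfolding V_def fz_def
      by (intro DERIV_add DERIV_cmult Wf_dz[OF that, of 0 "-1" \<beta>, folded W_def])
  qed (use that eqV in auto)
  moreover have "((\<lambda>w. fz w t) has_real_derivative fzz z t) (at z)" if "z>0" "t>0" for z t
  proof -
    have l: "((\<lambda>w. ln w - ln t) has_real_derivative 1/z) (at z)"
      using that by (auto intro!: derivative_eq_intros)
    have i: "((\<lambda>w. 1/w) has_real_derivative -1/z\<^sup>2) (at z)"
      using that by (auto intro!: derivative_eq_intros simp: power2_eq_square)
    have d1: "((\<lambda>w. W w t * (0/w - \<beta>*w/(2*t)) * (ln w - ln t)) has_real_derivative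
        W z t * ((0/z - \<beta>*z/(2*t))\<^sup>2 - 0/z\<^sup>2 - \<beta>/(2*t)) * (ln z - ln t)
         + W z t * (0/z - \<beta>*z/(2*t)) * (1/z)) (at z)"
      by (rule DERIV_cong[OF DERIV_mult[OF Wf_dzz[OF that, of 0 "-1" \<beta>, folded W_def] l]])
         (simp add: algebra_simps)
    have d2: "((\<lambda>w. W w t * (1/w)) has_real_derivative
        W z t * (0/z - \<beta>*z/(2*t)) * (1/z) + W z t * (-1/z\<^sup>2)) (at z)"
      by (rule DERIV_cong[OF DERIV_mult[OF Wf_dz[OF that, of 0 "-1" \<beta>, folded W_def] i]])
         (simp add: algebra_simps)
    show ?thesis
      unfolding fzz_def fz_def
      by (intro DERIV_add DERIV_cmult d1 d2 Wf_dzz[OF that, of 0 "-1" \<beta>, folded W_def])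
  qed
  moreover have "\<beta>*ft z t = fzz z t + 1/z * fz z t" if "z>0" "t>0" for z t
    unfolding ft_def fz_def fzz_def using that by (rule pde_eq1)
  ultimately show ?thesis unfolding Good_def by blast
qed


theorem mainTheorem9:
  fixes \<nu> \<beta> c1 c2 :: real and K J :: "real \<Rightarrow> real"
  assumes nu_pos: "\<nu> > 0"
    and K_smooth: "\<forall>n x. (deriv ^^ n) K differentiable (at x)"
    and K_pos: "\<forall>x. K x > 0"
    and J_antideriv: "\<forall>x. (J has_real_derivative K x) (at x)"
    and J_inj: "inj J"
  defines "v \<equiv> vsol \<nu> \<beta> c1 c2"
    and "u \<equiv> (\<lambda>z t. inv J (vsol \<nu> \<beta> c1 c2 z t))"
  shows
    "(\<forall>z>0. \<forall>t>0.
        (\<lambda>s. v z s) differentiable (at t) \<and>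
        (\<forall>\<^sub>F y in nhds z. (\<lambda>w. v w t) differentiable (at y)) \<and>
        (\<lambda>y. deriv (\<lambda>w. v w t) y) differentiable (at z) \<and>
        \<beta> * deriv (\<lambda>s. v z s) t =
          deriv (\<lambda>y. deriv (\<lambda>w. v w t) y) z + \<nu> / z * deriv (\<lambda>w. v w t) z)
     \<and>
     (\<forall>z>0. \<forall>t>0. v z t \<in> range J \<longrightarrow>
        (\<lambda>s. u z s) differentiable (at t) \<and>
        (\<forall>\<^sub>F y in nhds z. (\<lambda>w. u w t) differentiable (at y)) \<and>
        (\<lambda>y. K (u y t) * y powr \<nu> * deriv (\<lambda>w. u w t) y) differentiable (at z) \<and>
        (\<beta> * K (u z t)) * deriv (\<lambda>s. u z s) t =
          z powr (-\<nu>) * deriv (\<lambda>y. K (u y t) * y powr \<nu> * deriv (\<lambda>w. u w t) y) z)"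
proof -
  have G: "Good (vsol \<nu> \<beta> c1 c2) \<beta> \<nu>"
  proof (cases "\<nu> = 1")
    case True then show ?thesis using Good_eq1[of \<beta> c1 c2] by simp
  next
    case False then show ?thesis by (rule Good_ne1)
  qed
  then obtain ft fz fzz where
    h1: "\<forall>z t. z>0 \<longrightarrow> t>0 \<longrightarrow> ((\<lambda>s. vsol \<nu> \<beta> c1 c2 z s) has_real_derivative ft z t) (at t)" and
    h2: "\<forall>z t. z>0 \<longrightarrow> t>0 \<longrightarrow> ((\<lambda>w. vsol \<nu> \<beta> c1 c2 w t) has_real_derivative fz z t) (at z)" and
    h3: "\<forall>z t. z>0 \<longrightarrow> t>0 \<longrightarrow> ((\<lambda>w. fz w t) has_real_derivative fzz z t) (at z)" and
    h4: "\<forall>z t. z>0 \<longrightarrow> t>0 \<longrightarrow> \<beta>*ft z t = fzz z t + \<nu>/z * fz z t"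
    unfolding Good_def by blast
  show ?thesis unfolding v_def u_def
  proof (rule conjI)
    show "\<forall>z>0. \<forall>t>0. (\<lambda>s. vsol \<nu> \<beta> c1 c2 z s) differentiable (at t) \<and>
        (\<forall>\<^sub>F y in nhds z. (\<lambda>w. vsol \<nu> \<beta> c1 c2 w t) differentiable (at y)) \<and>
        (\<lambda>y. deriv (\<lambda>w. vsol \<nu> \<beta> c1 c2 w t) y) differentiable (at z) \<and>
        \<beta> * deriv (\<lambda>s. vsol \<nu> \<beta> c1 c2 z s) t =
          deriv (\<lambda>y. deriv (\<lambda>w. vsol \<nu> \<beta> c1 c2 w t) y) z + \<nu> / z * deriv (\<lambda>w. vsol \<nu> \<beta> c1 c2 w t) z"
      by (rule part1[where ft=ft and fz=fz and fzz=fzz]) (use h1 h2 h3 h4 in auto)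
    show "\<forall>z>0. \<forall>t>0. vsol \<nu> \<beta> c1 c2 z t \<in> range J \<longrightarrow>
        (\<lambda>s. inv J (vsol \<nu> \<beta> c1 c2 z s)) differentiable (at t) \<and>
        (\<forall>\<^sub>F y in nhds z. (\<lambda>w. inv J (vsol \<nu> \<beta> c1 c2 w t)) differentiable (at y)) \<and>
        (\<lambda>y. K (inv J (vsol \<nu> \<beta> c1 c2 y t)) * y powr \<nu> * deriv (\<lambda>w. inv J (vsol \<nu> \<beta> c1 c2 w t)) y) differentiable (at z) \<and>
        (\<beta> * K (inv J (vsol \<nu> \<beta> c1 c2 z t))) * deriv (\<lambda>s. inv J (vsol \<nu> \<beta> c1 c2 z s)) t =
          z powr (-\<nu>) * deriv (\<lambda>y. K (inv J (vsol \<nu> \<beta> c1 c2 y t)) * y powr \<nu> * deriv (\<lambda>w. inv J (vsol \<nu> \<beta> c1 c2 w t)) y) z"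
      using part2[where v="vsol \<nu> \<beta> c1 c2" and ft=ft and fz=fz and fzz=fzz and K=K and J=J
          and u="\<lambda>z t. inv J (vsol \<nu> \<beta> c1 c2 z t)" and \<beta>=\<beta> and \<nu>=\<nu>]
        h1 h2 h3 h4 K_pos J_antideriv J_inj by auto
  qed
qed

end
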